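(* The algorithm $\mathcal{U}$ described in the context is wait-free: in every execution (implementation history) of $\mathcal{U}$, no process can invoke DoOp$(o)$ and then take infinitely many steps within DoOp$(o)$ without completing it (i.e. without executing line 14).
   Context: Model: an asynchronous shared-memory system with possibly infinitely many processes, any of which may crash, communicating via atomic shared objects. A fetch-and-increment (F\&I) object stores an integer; F\&I$(C)$ atomically returns the current value and increments it. A generalized-compare-and-swap (GCAS) object $O$ stores a value and supports Read$(O)$ and GCAS$(c, O, v_1, v_2)$, which atomically does: if $c(\text{current value of } O, v_1)$ holds then set $O := v_2$ and return true, else return false. Tuples are compared componentwise for $=$; GCAS$(>, A, (t,-,-), v)$ succeeds iff the time field of $A$ is strictly greater than $t$. Implemented type $\mathcal{T} = (OP, RES, Q, \delta)$ with $\delta \subseteq Q\times OP\times Q\times RES$ and initial state $s_0$; a procedure $apply_{\mathcal{T}}(o,s)$ returns some $(s',r)$ with $(s,o,s',r)\in\delta$. $NULL$ is a value different from every response of $\mathcal{T}$, and $NOOP$ is a name different from every operation of $\mathcal{T}$. Algorithm $\mathcal{U}$: each process $p$ owns a GCAS object $H_p$ with fields $(time, response)$. Shared objects: F\&I object $C$, initially $1$; GCAS object $A$ with fields $(time, op, ptr)$, initially $(0, NOOP, h(NOOP))$, where $h(NOOP)$ is a pointer to an immutable location containing $(0,\perp)$; GCAS object $S$ with fields $(time, state, response, ptr)$, initially $(0, s_0, \perp, h(NOOP))$. Process $p$ performs operation $o$ by calling DoOp$(o)$: (1) DoOp$(o)$ invoked; (2) $t := $ F\&I$(C)$; (3) $H_p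 := (t, NULL)$; (4) while $H_p = (t, NULL)$ do: (5) $(t^*, s^*, r^*, roptr^* ) := S$; (6) GCAS$(=, *roptr^*, (t^*, NULL), (t^*, r^* ))$; (7) GCAS$(>, A, (t,-,-), (t, o, \&H_p))$; (8) $(t', o', roptr') := A$; (9) $(\hat t, \hat r) := *roptr'$; (10) if $(\hat t,\hat r) = (t', NULL)$ then (11) $(s', r') := apply_{\mathcal{T}}(o', s^* )$; (12) GCAS$(=, S, (t^*,s^*,r^*,roptr^* ), (t', s', r', roptr'))$; (13) else GCAS$(=, A, (t', o', roptr'), (t, o, \&H_p))$; end while; (14) return $H_p.response$. Lines 1 and 14 are the invocation and response steps. *)

theory Defs
  imports Main
begin

text \<open>Values stored in response fields: the special value NULL, the initial value bot
  (written as a perpendicular in the paper), or a genuine response of the type T.\<close>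
datatype 'r rval = NULL | BOT | Val 'r

text \<open>Pointers: either the immutable location h(NOOP) containing (0, bot),
  or the address of the GCAS object H_p of process p.\<close>
datatype 'p ptr = HNoop | HP 'p

text \<open>Operation field of A: None encodes NOOP, Some o an operation o of T.\<close>

record ('p, 'o, 'q, 'r) local =
  pc   :: nat            \<comment> \<open>next line to execute; 1 = idle (next step is an invocation)\<close>
  lop  :: 'o             \<comment> \<open>o, argument of the current DoOp\<close>
  lt   :: nat            \<comment> \<open>t\<close>
  ts   :: nat            \<comment> \<open>t*\<close>
  ss   :: 'q             \<comment> \<open>s*\<close>
  rs   :: "'r rval"      \<comment> \<open>r*\<close>
  rps  :: "'p ptr"       \<comment> \<open>roptr*\<close>
  tp   :: nat            \<comment> \<open>t'\<close>
  opp  :: "'o option"    \<comment> \<open>o'\<close>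
  rpp  :: "'p ptr"       \<comment> \<open>roptr'\<close>
  th   :: nat            \<comment> \<open>t hat\<close>
  rh   :: "'r rval"      \<comment> \<open>r hat\<close>
  sp   :: 'q             \<comment> \<open>s'\<close>
  rp   :: 'r             \<comment> \<open>r'\<close>

record ('p, 'o, 'q, 'r) config =
  Cc  :: nat                                  \<comment> \<open>F\&I object C\<close>
  Aa  :: "nat \<times> 'o option \<times> 'p ptr"        \<comment> \<open>GCAS object A\<close>
  Ss  :: "nat \<times> 'q \<times> 'r rval \<times> 'p ptr"    \<comment> \<open>GCAS object S\<close>
  Hh  :: "'p \<Rightarrow> nat \<times> 'r rval"             \<comment> \<open>GCAS objects H_p\<close>
  loc :: "'p \<Rightarrow> ('p, 'o, 'q, 'r) local"

definition init_config ::
  "'q \<Rightarrow> ('p \<Rightarrow> nat \<times> 'r rval) \<Rightarrow> ('p \<Rightarrow> ('p,'o,'q,'r) local) \<Rightarrow> ('p,'o,'q,'r) config \<Rightarrow> bool" where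
  "init_config s0 H0 L0 c \<longleftrightarrow>
     Cc c = 1 \<and> Aa c = (0, None, HNoop) \<and> Ss c = (0, s0, BOT, HNoop) \<and> Hh c = H0 \<and>
     loc c = L0 \<and> (\<forall>p. pc (L0 p) = 1)"

definition deref :: "('p,'o,'q,'r) config \<Rightarrow> 'p ptr \<Rightarrow> nat \<times> 'r rval" where
  "deref c x = (case x of HNoop \<Rightarrow> (0, BOT) | HP q \<Rightarrow> Hh c q)"

text \<open>One atomic step of process p (one numbered line of DoOp).\<close>
definition U_step ::
  "('q \<times> 'o \<times> 'q \<times> 'r) set \<Rightarrow> 'p \<Rightarrow> ('p,'o,'q,'r) config \<Rightarrow> ('p,'o,'q,'r) config \<Rightarrow> bool" where
  "U_step \<delta> p c c' \<longleftrightarrow>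
    (let l = loc c p; setl = (\<lambda>l'. c\<lparr>loc := (loc c)(p := l')\<rparr>) in
     (if pc l = 1 then (\<exists>x. c' = setl (l\<lparr>pc := 2, lop := x\<rparr>))
      else if pc l = 2 then c' = (setl (l\<lparr>pc := 3, lt := Cc c\<rparr>))\<lparr>Cc := Cc c + 1\<rparr>
      else if pc l = 3 then c' = (setl (l\<lparr>pc := 4\<rparr>))\<lparr>Hh := (Hh c)(p := (lt l, NULL))\<rparr>
      else if pc l = 4 then c' = setl (l\<lparr>pc := (if Hh c p = (lt l, NULL) then 5 else 14)\<rparr>)
      else if pc l = 5 then (case Ss c of (t1, s1, r1, p1) \<Rightarrow>
              c' = setl (l\<lparr>pc := 6, ts := t1, ss := s1, rs := r1, rps := p1\<rparr>))
      else if pc l = 6 then c' = (setl (l\<lparr>pc := 7\<rparr>))\<lparr>Hh :=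
              (case rps l of HNoop \<Rightarrow> Hh c
               | HP q \<Rightarrow> (if Hh c q = (ts l, NULL) then (Hh c)(q := (ts l, rs l)) else Hh c))\<rparr>
      else if pc l = 7 then c' = (setl (l\<lparr>pc := 8\<rparr>))\<lparr>Aa :=
              (if fst (Aa c) > lt l then (lt l, Some (lop l), HP p) else Aa c)\<rparr>
      else if pc l = 8 then (case Aa c of (t1, o1, p1) \<Rightarrow>
              c' = setl (l\<lparr>pc := 9, tp := t1, opp := o1, rpp := p1\<rparr>))
      else if pc l = 9 then (case deref c (rpp l) of (t1, r1) \<Rightarrow>
              c' = setl (l\<lparr>pc := 10, th := t1, rh := r1\<rparr>))
      else if pc l = 10 then c' = setl (l\<lparr>pc := (if (th l, rh l) = (tp l, NULL) then 11 else 13)\<rparr>)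
      else if pc l = 11 then (\<exists>x s1 r1. opp l = Some x \<and> (ss l, x, s1, r1) \<in> \<delta> \<and>
              c' = setl (l\<lparr>pc := 12, sp := s1, rp := r1\<rparr>))
      else if pc l = 12 then c' = (setl (l\<lparr>pc := 4\<rparr>))\<lparr>Ss :=
              (if Ss c = (ts l, ss l, rs l, rps l) then (tp l, sp l, Val (rp l), rpp l) else Ss c)\<rparr>
      else if pc l = 13 then c' = (setl (l\<lparr>pc := 4\<rparr>))\<lparr>Aa :=
              (if Aa c = (tp l, opp l, rpp l) then (lt l, Some (lop l), HP p) else Aa c)\<rparr>
      else if pc l = 14 then c' = setl (l\<lparr>pc := 1\<rparr>)
      else False))"

end

theory Submission
  imports Defs
begin

lemma step_other:
  assumes "U_step \<delta> x c c'" "y \<noteq> x"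
  shows "loc c' y = loc c y"
  using assms unfolding U_step_def Let_def
  by (auto split: if_splits prod.splits)

lemma step_Cc:
  assumes "U_step \<delta> x c c'"
  shows "Cc c' = (if pc (loc c x) = 2 then Suc (Cc c) else Cc c)"
  using assms unfolding U_step_def Let_def
  by (auto split: if_splits prod.splits)

lemma step_A:
  assumes "U_step \<delta> x c c'"
  shows "Aa c' = (if pc (loc c x) = 7 then (if fst (Aa c) > lt (loc c x) then (lt (loc c x), Some (lop (loc c x)), HP x) else Aa c)
     else if pc (loc c x) = 13 then (if Aa c = (tp (loc c x), opp (loc c x), rpp (loc c x)) then (lt (loc c x), Some (lop (loc c x)), HP x) else Aa c)
     else Aa c)"
  using assms unfolding U_step_def Let_def
  by (auto split: if_splits prod.splits)

lemma step_S:
  assumes "U_step \<delta> x c c'"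
  shows "Ss c' = (if pc (loc c x) = 12 then (if Ss c = (ts (loc c x), ss (loc c x), rs (loc c x), rps (loc c x)) then (tp (loc c x), sp (loc c x), Val (rp (loc c x)), rpp (loc c x)) else Ss c)
     else Ss c)"
  using assms unfolding U_step_def Let_def
  by (auto split: if_splits prod.splits)

lemma step_H:
  assumes "U_step \<delta> x c c'"
  shows "Hh c' = (if pc (loc c x) = 3 then (Hh c)(x := (lt (loc c x), NULL))
     else if pc (loc c x) = 6 then (case rps (loc c x) of HNoop \<Rightarrow> Hh c
               | HP q \<Rightarrow> (if Hh c q = (ts (loc c x), NULL) then (Hh c)(q := (ts (loc c x), rs (loc c x))) else Hh c))
     else Hh c)"
  using assms unfolding U_step_def Let_def
  by (auto split: if_splits prod.splits)

lemma step_pc_range: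
  assumes "U_step \<delta> x c c'"
  shows "pc (loc c x) \<in> {1..14}"
  using assms unfolding U_step_def Let_def
  by (auto split: if_splits prod.splits)

lemma step_loc:
  assumes "U_step \<delta> x c c'"
  shows "pc (loc c x) = 1 \<Longrightarrow> \<exists>o1. loc c' x = (loc c x)\<lparr>pc := 2, lop := o1\<rparr>"
    and "pc (loc c x) = 2 \<Longrightarrow> loc c' x = (loc c x)\<lparr>pc := 3, lt := Cc c\<rparr>"
    and "pc (loc c x) = 3 \<Longrightarrow> loc c' x = (loc c x)\<lparr>pc := 4\<rparr>"
    and "pc (loc c x) = 4 \<Longrightarrow> loc c' x = (loc c x)\<lparr>pc := (if Hh c x = (lt (loc c x), NULL) then 5 else 14)\<rparr>"
    and "pc (loc c x) = 5 \<Longrightarrow> loc c' x = (loc c x)\<lparr>pc := 6, ts := fst (Ss c), ss := fst (snd (Ss c)),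
            rs := fst (snd (snd (Ss c))), rps := snd (snd (snd (Ss c)))\<rparr>"
    and "pc (loc c x) = 6 \<Longrightarrow> loc c' x = (loc c x)\<lparr>pc := 7\<rparr>"
    and "pc (loc c x) = 7 \<Longrightarrow> loc c' x = (loc c x)\<lparr>pc := 8\<rparr>"
    and "pc (loc c x) = 8 \<Longrightarrow> loc c' x = (loc c x)\<lparr>pc := 9, tp := fst (Aa c), opp := fst (snd (Aa c)), rpp := snd (snd (Aa c))\<rparr>"
    and "pc (loc c x) = 9 \<Longrightarrow> loc c' x = (loc c x)\<lparr>pc := 10, th := fst (deref c (rpp (loc c x))), rh := snd (deref c (rpp (loc c x)))\<rparr>"
    and "pc (loc c x) = 10 \<Longrightarrow> loc c' x = (loc c x)\<lparr>pc := (if (th (loc c x), rh (loc c x)) = (tp (loc c x), NULL) then 11 else 13)\<rparr>"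
    and "pc (loc c x) = 12 \<Longrightarrow> loc c' x = (loc c x)\<lparr>pc := 4\<rparr>"
    and "pc (loc c x) = 13 \<Longrightarrow> loc c' x = (loc c x)\<lparr>pc := 4\<rparr>"
    and "pc (loc c x) = 14 \<Longrightarrow> loc c' x = (loc c x)\<lparr>pc := 1\<rparr>"
  using assms unfolding U_step_def Let_def
  by (auto split: if_splits prod.splits)


lemma loc_upd: "U_step \<delta> x c c' \<Longrightarrow> loc c' = (loc c)(x := loc c' x)"
  using step_other by fastforce

lemma step_loc11:
  assumes "U_step \<delta> x c c'" "pc (loc c x) = 11"
  shows "\<exists>o1 s1 r1. opp (loc c x) = Some o1 \<and> (ss (loc c x), o1, s1, r1) \<in> \<delta> \<and> loc c' x = (loc c x)\<lparr>pc := 12, sp := s1, rp := r1\<rparr>"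
  using assms unfolding U_step_def Let_def
  apply (simp)
  apply (elim exE conjE)
  apply (rule_tac x=xa in exI)
  apply simp
  apply blast
  done

definition pv :: "('p,'o,'q,'r) config \<Rightarrow> (nat \<times> 'p ptr) set" where
 "pv c = {(fst (Aa c), snd (snd (Aa c))), (fst (Ss c), snd (snd (snd (Ss c))))}
   \<union> {(ts (loc c x), rps (loc c x)) | x. pc (loc c x) \<in> {6..12}}
   \<union> {(tp (loc c x), rpp (loc c x)) | x. pc (loc c x) \<in> {9..13}}"

definition I_lt where "I_lt c \<longleftrightarrow> 1 \<le> Cc c \<and>
  (\<forall>x. pc (loc c x) \<in> {3..14} \<longrightarrow> 0 < lt (loc c x) \<and> lt (loc c x) < Cc c)"
definition I_U where "I_U c \<longleftrightarrow>
  (\<forall>x y. x \<noteq> y \<longrightarrow> pc (loc c x) \<in> {3..14} \<longrightarrow> pc (loc c y) \<in> {3..14} \<longrightarrow> lt (loc c x) \<noteq> lt (loc c y))"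
definition I_J where "I_J c \<longleftrightarrow>
  (\<forall>\<tau> y. (\<tau>, HP y) \<in> pv c \<longrightarrow> \<tau> < Cc c \<and> (pc (loc c y) = 3 \<longrightarrow> \<tau> < lt (loc c y)) \<and>
       (\<forall>z. pc (loc c z) \<in> {3..14} \<longrightarrow> lt (loc c z) = \<tau> \<longrightarrow> z = y))"
definition I_misc where "I_misc c \<longleftrightarrow>
  (snd (snd (Aa c)) = HNoop \<longrightarrow> fst (Aa c) = 0) \<and>
  fst (snd (snd (Ss c))) \<noteq> NULL \<and>
  (\<forall>x. pc (loc c x) \<in> {6..12} \<longrightarrow> rs (loc c x) \<noteq> NULL)"
definition I_H where "I_H c \<longleftrightarrow>
  (\<forall>x q. pc (loc c x) \<in> {7..12} \<longrightarrow> rps (loc c x) = HP q \<longrightarrow> Hh c q \<noteq> (ts (loc c x), NULL)) \<and>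
  (\<forall>x q. pc (loc c x) = 10 \<longrightarrow> rpp (loc c x) = HP q \<longrightarrow> (th (loc c x), rh (loc c x)) \<noteq> (tp (loc c x), NULL) \<longrightarrow> Hh c q \<noteq> (tp (loc c x), NULL)) \<and>
  (\<forall>x q. pc (loc c x) = 13 \<longrightarrow> rpp (loc c x) = HP q \<longrightarrow> Hh c q \<noteq> (tp (loc c x), NULL))"

definition Inv where "Inv c \<longleftrightarrow> I_lt c \<and> I_U c \<and> I_J c \<and> I_misc c \<and> I_H c"

lemma inv_init:
  assumes "init_config s0 H0 L0 c"
  shows "Inv c"
  using assms unfolding init_config_def Inv_def I_lt_def I_U_def I_J_def I_misc_def I_H_def pv_def by auto

lemma I_lt_step: assumes "I_lt c" "U_step \<delta> x c c'" shows "I_lt c'"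
  using assms unfolding I_lt_def U_step_def Let_def
  by (auto split: if_splits prod.splits)

lemma I_U_step: assumes "I_lt c" "I_U c" "U_step \<delta> x c c'" shows "I_U c'"
  using assms unfolding I_lt_def I_U_def U_step_def Let_def
  by (auto split: if_splits prod.splits)

lemma I_misc_step: assumes "I_misc c" "U_step \<delta> x c c'" shows "I_misc c'"
  using assms unfolding I_misc_def U_step_def Let_def
  by (auto split: if_splits prod.splits)

lemma pv_step: assumes "U_step \<delta> x c c'"
  shows "pv c' \<subseteq> pv c \<union> (if pc (loc c x) \<in> {7,13} then {(lt (loc c x), HP x)} else {})"
  using assms unfolding pv_def U_step_def Let_def
  by (auto split: if_splits prod.splits)

lemma L_lt: assumes "U_step \<delta> x c c'"
  shows "lt (loc c' x) = (if pc (loc c x) = 2 then Cc c else lt (loc c x))"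
  using assms unfolding U_step_def Let_def
  by (auto split: if_splits prod.splits)

lemma L_pc3: assumes "U_step \<delta> x c c'" "pc (loc c' x) \<in> {3..14}"
  shows "pc (loc c x) = 2 \<or> pc (loc c x) \<in> {3..13}"
  using assms unfolding U_step_def Let_def
  by (auto split: if_splits prod.splits)

lemma L_pceq3: assumes "U_step \<delta> x c c'"
  shows "pc (loc c' x) = 3 \<longleftrightarrow> pc (loc c x) = 2"
  using assms unfolding U_step_def Let_def
  by (auto split: if_splits prod.splits)

lemma Cc_mono: assumes "U_step \<delta> x c c'" shows "Cc c \<le> Cc c'"
  using step_Cc[OF assms] by simp

lemma pv_ts: "pc (loc c x') \<in> {6..12} \<Longrightarrow> (ts (loc c x'), rps (loc c x')) \<in> pv c"
  unfolding pv_def by blast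
lemma pv_tp: "pc (loc c x') \<in> {9..13} \<Longrightarrow> (tp (loc c x'), rpp (loc c x')) \<in> pv c"
  unfolding pv_def by blast
lemma pv_A: "(fst (Aa c), snd (snd (Aa c))) \<in> pv c"
  unfolding pv_def by blast
lemma pv_S: "(fst (Ss c), snd (snd (snd (Ss c)))) \<in> pv c"
  unfolding pv_def by blast

lemma J_D: assumes "I_J c" "(\<tau>, HP y) \<in> pv c"
  shows "\<tau> < Cc c" "pc (loc c y) = 3 \<Longrightarrow> \<tau> < lt (loc c y)"
    "pc (loc c z) \<in> {3..14} \<Longrightarrow> lt (loc c z) = \<tau> \<Longrightarrow> z = y"
  using assms unfolding I_J_def by blast+

lemma J_facts: assumes "I_J c"
  shows "\<forall>x' y. pc (loc c x') \<in> {6..12} \<longrightarrow> rps (loc c x') = HP y \<longrightarrow> pc (loc c y) = 3 \<longrightarrow> ts (loc c x') < lt (loc c y)"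
    and "\<forall>x' y. pc (loc c x') \<in> {9..13} \<longrightarrow> rpp (loc c x') = HP y \<longrightarrow> pc (loc c y) = 3 \<longrightarrow> tp (loc c x') < lt (loc c y)"
proof -
  show "\<forall>x' y. pc (loc c x') \<in> {6..12} \<longrightarrow> rps (loc c x') = HP y \<longrightarrow> pc (loc c y) = 3 \<longrightarrow> ts (loc c x') < lt (loc c y)"
  proof (intro allI impI)
    fix x' y assume a: "pc (loc c x') \<in> {6..12}" "rps (loc c x') = HP y" "pc (loc c y) = 3"
    have "(ts (loc c x'), HP y) \<in> pv c" using pv_ts[OF a(1)] a(2) by simp
    then show "ts (loc c x') < lt (loc c y)" using J_D(2)[OF assms] a(3) by blast
  qed
  show "\<forall>x' y. pc (loc c x') \<in> {9..13} \<longrightarrow> rpp (loc c x') = HP y \<longrightarrow> pc (loc c y) = 3 \<longrightarrow> tp (loc c x') < lt (loc c y)"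
  proof (intro allI impI)
    fix x' y assume a: "pc (loc c x') \<in> {9..13}" "rpp (loc c x') = HP y" "pc (loc c y) = 3"
    have "(tp (loc c x'), HP y) \<in> pv c" using pv_tp[OF a(1)] a(2) by simp
    then show "tp (loc c x') < lt (loc c y)" using J_D(2)[OF assms] a(3) by blast
  qed
qed

lemma I_J_step: assumes lt: "I_lt c" and U: "I_U c" and J: "I_J c" and st: "U_step \<delta> x c c'"
  shows "I_J c'"
  unfolding I_J_def
proof (intro allI impI)
  fix \<tau> y assume m: "(\<tau>, HP y) \<in> pv c'"
  have oth: "\<And>z. z \<noteq> x \<Longrightarrow> loc c' z = loc c z" using step_other[OF st] by blast
  have cm: "Cc c \<le> Cc c'" by (rule Cc_mono[OF st])
  from pv_step[OF st] m consider (old) "(\<tau>, HP y) \<in> pv c" | (new) "pc (loc c x) \<in> {7,13}" "\<tau> = lt (loc c x)" "y = x"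
    by (auto split: if_splits)
  then show "\<tau> < Cc c' \<and> (pc (loc c' y) = 3 \<longrightarrow> \<tau> < lt (loc c' y)) \<and>
       (\<forall>z. pc (loc c' z) \<in> {3..14} \<longrightarrow> lt (loc c' z) = \<tau> \<longrightarrow> z = y)"
  proof cases
    case old
    with J have j1: "\<tau> < Cc c" and j2: "pc (loc c y) = 3 \<longrightarrow> \<tau> < lt (loc c y)"
      and j3: "\<forall>z. pc (loc c z) \<in> {3..14} \<longrightarrow> lt (loc c z) = \<tau> \<longrightarrow> z = y"
      unfolding I_J_def by blast+
    have a: "\<tau> < Cc c'" using j1 cm by simp
    have b: "pc (loc c' y) = 3 \<longrightarrow> \<tau> < lt (loc c' y)"
    proof (cases "y = x")
      case True then show ?thesis using L_pceq3[OF st] L_lt[OF st] j1 by auto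
    next
      case False then show ?thesis using oth j2 by simp
    qed
    have c: "\<forall>z. pc (loc c' z) \<in> {3..14} \<longrightarrow> lt (loc c' z) = \<tau> \<longrightarrow> z = y"
    proof (intro allI impI)
      fix z assume z1: "pc (loc c' z) \<in> {3..14}" and z2: "lt (loc c' z) = \<tau>"
      show "z = y"
      proof (cases "z = x")
        case True
        with L_pc3[OF st] z1 consider "pc (loc c x) = 2" | "pc (loc c x) \<in> {3..13}" by auto
        then show ?thesis
        proof cases
          case 1 then show ?thesis using L_lt[OF st] z2 j1 True by simp
        next
          case 2 then show ?thesis using L_lt[OF st] z2 j3 True by auto
        qed
      next
        case False then show ?thesis using oth z1 z2 j3 by auto
      qed
    qed
    show ?thesis using a b c by blast
  next
    case new
    have "lt (loc c x) < Cc c" using lt new(1) unfolding I_lt_def by auto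
    then have a: "\<tau> < Cc c'" using new cm by simp
    have b: "pc (loc c' y) \<noteq> 3" using L_pceq3[OF st] new by auto
    have c: "\<forall>z. pc (loc c' z) \<in> {3..14} \<longrightarrow> lt (loc c' z) = \<tau> \<longrightarrow> z = y"
    proof (intro allI impI)
      fix z assume z1: "pc (loc c' z) \<in> {3..14}" and z2: "lt (loc c' z) = \<tau>"
      show "z = y"
      proof (rule ccontr)
        assume "z \<noteq> y"
        then have "z \<noteq> x" using new by simp
        then show False using U oth z1 z2 new unfolding I_U_def by force
      qed
    qed
    show ?thesis using a b c by blast
  qed
qed



lemma range14: "(n::nat) \<in> {1..14} \<Longrightarrow> n = 1 \<or> n = 2 \<or> n = 3 \<or> n = 4 \<or> n = 5 \<or> n = 6 \<or> n = 7 \<or> n = 8 \<or> n = 9 \<or> n = 10 \<or> n = 11 \<or> n = 12 \<or> n = 13 \<or> n = 14"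
  by (simp, presburger)

definition I_Hx where "I_Hx c y \<longleftrightarrow>
  (\<forall>q. pc (loc c y) \<in> {7..12} \<longrightarrow> rps (loc c y) = HP q \<longrightarrow> Hh c q \<noteq> (ts (loc c y), NULL)) \<and>
  (\<forall>q. pc (loc c y) = 10 \<longrightarrow> rpp (loc c y) = HP q \<longrightarrow> (th (loc c y), rh (loc c y)) \<noteq> (tp (loc c y), NULL) \<longrightarrow> Hh c q \<noteq> (tp (loc c y), NULL)) \<and>
  (\<forall>q. pc (loc c y) = 13 \<longrightarrow> rpp (loc c y) = HP q \<longrightarrow> Hh c q \<noteq> (tp (loc c y), NULL))"

lemma I_H_x: "I_H c \<longleftrightarrow> (\<forall>y. I_Hx c y)"
  unfolding I_H_def I_Hx_def by blast

lemma H_back: assumes M: "I_misc c" and st: "U_step \<delta> x c c'" and n3: "pc (loc c x) \<noteq> 3"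
  and h: "Hh c' q = (\<tau>, NULL)" shows "Hh c q = (\<tau>, NULL)"
proof (cases "pc (loc c x) = 6")
  case True
  then have "rs (loc c x) \<noteq> NULL" using M unfolding I_misc_def by auto
  then show ?thesis using h step_H[OF st] True by (auto split: ptr.splits if_splits)
next
  case False then show ?thesis using h step_H[OF st] n3 by simp
qed

lemma I_Hx_other: assumes M: "I_misc c" and st: "U_step \<delta> x c c'" and n3: "pc (loc c x) \<noteq> 3"
  and hx: "I_Hx c y" and yx: "y \<noteq> x" shows "I_Hx c' y"
proof -
  have l: "loc c' y = loc c y" using step_other[OF st yx] .
  show ?thesis using hx H_back[OF M st n3] unfolding I_Hx_def l by metis
qed

lemma I_Hx_self: assumes M: "I_misc c" and st: "U_step \<delta> x c c'" and n3: "pc (loc c x) \<noteq> 3"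
  and hx: "I_Hx c x" shows "I_Hx c' x"
proof -
  note hb = H_back[OF M st n3]
  have r: "pc (loc c x) \<in> {1..14}" by (rule step_pc_range[OF st])
  then consider "pc (loc c x) \<in> {1,2,4,5,12,13,14}" | "pc (loc c x) = 6" | "pc (loc c x) = 7" | "pc (loc c x) = 8"
    | "pc (loc c x) = 9" | "pc (loc c x) = 10" | "pc (loc c x) = 11" using n3 range14[OF r] by fastforce
  then show ?thesis
  proof cases
    case 1
    then have "pc (loc c' x) \<notin> {7..13}"
      using step_loc(1,2,4,5,11,12,13)[OF st] by (auto split: if_splits)
    then show ?thesis unfolding I_Hx_def by auto
  next
    case 2
    have rs: "rs (loc c x) \<noteq> NULL" using M 2 unfolding I_misc_def by auto
    have l: "loc c' x = (loc c x)\<lparr>pc := 7\<rparr>" using step_loc(6)[OF st 2] .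
    show ?thesis unfolding I_Hx_def l using step_H[OF st] 2 rs by (auto split: ptr.splits if_splits)
  next
    case 3
    have l: "loc c' x = (loc c x)\<lparr>pc := 8\<rparr>" using step_loc(7)[OF st 3] .
    show ?thesis using hx hb 3 unfolding I_Hx_def l by auto
  next
    case 4
    have l: "loc c' x = (loc c x)\<lparr>pc := 9, tp := fst (Aa c), opp := fst (snd (Aa c)), rpp := snd (snd (Aa c))\<rparr>" using step_loc(8)[OF st 4] .
    show ?thesis using hx hb 4 unfolding I_Hx_def l by auto
  next
    case 5
    have l: "loc c' x = (loc c x)\<lparr>pc := 10, th := fst (deref c (rpp (loc c x))), rh := snd (deref c (rpp (loc c x)))\<rparr>" using step_loc(9)[OF st 5] .
    show ?thesis using hx hb 5 unfolding I_Hx_def l deref_def by (auto split: ptr.splits)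
  next
    case 6
    have l: "loc c' x = (loc c x)\<lparr>pc := (if (th (loc c x), rh (loc c x)) = (tp (loc c x), NULL) then 11 else 13)\<rparr>" using step_loc(10)[OF st 6] .
    show ?thesis using hx hb 6 unfolding I_Hx_def l by (auto split: if_splits)
  next
    case 7
    obtain o1 s1 r1 where l: "loc c' x = (loc c x)\<lparr>pc := 12, sp := s1, rp := r1\<rparr>" using step_loc11[OF st 7] by blast
    show ?thesis using hx hb 7 unfolding I_Hx_def l by auto
  qed
qed

lemma I_H_stepn: assumes H: "I_H c" and M: "I_misc c" and st: "U_step \<delta> x c c'" and n3: "pc (loc c x) \<noteq> 3"
  shows "I_H c'"
  unfolding I_H_x
proof
  fix y show "I_Hx c' y"
  proof (cases "y = x")
    case True then show ?thesis using I_Hx_self[OF M st n3] H unfolding I_H_x by simp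
  next
    case False then show ?thesis using I_Hx_other[OF M st n3] H unfolding I_H_x by simp
  qed
qed


lemma I_H_step3: assumes H: "I_H c" and J: "I_J c" and st: "U_step \<delta> x c c'" and p3: "pc (loc c x) = 3"
  shows "I_H c'"
  unfolding I_H_x
proof
  fix y
  note jf = J_facts[OF J]
  have HH: "Hh c' = (Hh c)(x := (lt (loc c x), NULL))" using step_H[OF st] p3 by simp
  show "I_Hx c' y"
  proof (cases "y = x")
    case True
    have "loc c' x = (loc c x)\<lparr>pc := 4\<rparr>" using step_loc(3)[OF st p3] .
    then show ?thesis unfolding I_Hx_def True by simp
  next
    case False
    have l: "loc c' y = loc c y" using step_other[OF st False] .
    have hy: "I_Hx c y" using H unfolding I_H_x by blast
    have a1: "\<And>q. pc (loc c y) \<in> {7..12} \<Longrightarrow> rps (loc c y) = HP q \<Longrightarrow> Hh c' q \<noteq> (ts (loc c y), NULL)"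
    proof -
      fix q assume a: "pc (loc c y) \<in> {7..12}" "rps (loc c y) = HP q"
      show "Hh c' q \<noteq> (ts (loc c y), NULL)"
      proof (cases "q = x")
        case True
        have "ts (loc c y) < lt (loc c x)" using jf(1) a True p3 by auto
        then show ?thesis using True HH by auto
      next
        case False then show ?thesis using hy a HH unfolding I_Hx_def by auto
      qed
    qed
    have a2: "\<And>q. pc (loc c y) \<in> {9..13} \<Longrightarrow> rpp (loc c y) = HP q \<Longrightarrow> Hh c q \<noteq> (tp (loc c y), NULL) \<Longrightarrow> Hh c' q \<noteq> (tp (loc c y), NULL)"
    proof -
      fix q assume a: "pc (loc c y) \<in> {9..13}" "rpp (loc c y) = HP q" "Hh c q \<noteq> (tp (loc c y), NULL)"
      show "Hh c' q \<noteq> (tp (loc c y), NULL)"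
      proof (cases "q = x")
        case True
        have "tp (loc c y) < lt (loc c x)" using jf(2) a True p3 by auto
        then show ?thesis using True HH by auto
      next
        case False then show ?thesis using a HH by auto
      qed
    qed
    show ?thesis using hy a1 a2 unfolding I_Hx_def l by auto
  qed
qed

lemma Inv_step: assumes "Inv c" "U_step \<delta> x c c'" shows "Inv c'"
proof -
  have H: "I_H c'"
  proof (cases "pc (loc c x) = 3")
    case True then show ?thesis using I_H_step3[OF _ _ assms(2) True] assms(1) unfolding Inv_def by simp
  next
    case False then show ?thesis using I_H_stepn[OF _ _ assms(2) False] assms(1) unfolding Inv_def by simp
  qed
  have "I_lt c \<and> I_U c \<and> I_J c \<and> I_misc c" using assms(1) unfolding Inv_def by simp
  then have "I_lt c' \<and> I_U c' \<and> I_J c' \<and> I_misc c'"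
    using I_lt_step[OF _ assms(2)] I_U_step[OF _ _ assms(2)] I_J_step[OF _ _ _ assms(2)] I_misc_step[OF _ assms(2)] by simp
  then show ?thesis using H unfolding Inv_def by simp
qed

lemma step_pc_cases: assumes st: "U_step \<delta> x c c'"
  shows "pc (loc c x) = 1 \<Longrightarrow> pc (loc c' x) = 2"
    "pc (loc c x) = 2 \<Longrightarrow> pc (loc c' x) = 3"
    "pc (loc c x) = 3 \<Longrightarrow> pc (loc c' x) = 4"
    "pc (loc c x) = 4 \<Longrightarrow> pc (loc c' x) = (if Hh c x = (lt (loc c x), NULL) then 5 else 14)"
    "pc (loc c x) = 5 \<Longrightarrow> pc (loc c' x) = 6"
    "pc (loc c x) = 6 \<Longrightarrow> pc (loc c' x) = 7"
    "pc (loc c x) = 7 \<Longrightarrow> pc (loc c' x) = 8"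
    "pc (loc c x) = 8 \<Longrightarrow> pc (loc c' x) = 9"
    "pc (loc c x) = 9 \<Longrightarrow> pc (loc c' x) = 10"
    "pc (loc c x) = 10 \<Longrightarrow> pc (loc c' x) = (if (th (loc c x), rh (loc c x)) = (tp (loc c x), NULL) then 11 else 13)"
    "pc (loc c x) = 11 \<Longrightarrow> pc (loc c' x) = 12"
    "pc (loc c x) = 12 \<Longrightarrow> pc (loc c' x) = 4"
    "pc (loc c x) = 13 \<Longrightarrow> pc (loc c' x) = 4"
    "pc (loc c x) = 14 \<Longrightarrow> pc (loc c' x) = 1"
  subgoal using step_loc(1)[OF st] by auto
  subgoal using step_loc(2)[OF st] by simp
  subgoal using step_loc(3)[OF st] by simp
  subgoal using step_loc(4)[OF st] by simp
  subgoal using step_loc(5)[OF st] by simp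
  subgoal using step_loc(6)[OF st] by simp
  subgoal using step_loc(7)[OF st] by simp
  subgoal using step_loc(8)[OF st] by simp
  subgoal using step_loc(9)[OF st] by simp
  subgoal using step_loc(10)[OF st] by simp
  subgoal using step_loc11[OF st] by auto
  subgoal using step_loc(11)[OF st] by simp
  subgoal using step_loc(12)[OF st] by simp
  subgoal using step_loc(13)[OF st] by simp
  done

lemma step_lop: assumes st: "U_step \<delta> x c c'" and "pc (loc c x) \<noteq> 1"
  shows "lop (loc c' x) = lop (loc c x)"
  using assms unfolding U_step_def Let_def by (auto split: if_splits prod.splits)

lemma pc_next: assumes st: "U_step \<delta> x c c'" and r: "pc (loc c x) \<in> {5..13}"
  shows "pc (loc c' x) = 4 \<or> (pc (loc c x) < pc (loc c' x) \<and> pc (loc c' x) \<le> 13)"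
proof -
  have r14: "pc (loc c x) \<in> {1..14}" using r by auto
  show ?thesis using range14[OF r14] r step_pc_cases[OF st] by (elim disjE) auto
qed

lemma pc_next4: assumes st: "U_step \<delta> x c c'" and r: "pc (loc c x) \<in> {3..13}"
  shows "pc (loc c' x) \<in> {4..14} \<and> lt (loc c' x) = lt (loc c x) \<and> lop (loc c' x) = lop (loc c x)"
proof -
  have r14: "pc (loc c x) \<in> {1..14}" using r by auto
  have "pc (loc c' x) \<in> {4..14}" using range14[OF r14] r step_pc_cases[OF st] by (elim disjE) auto
  then show ?thesis using L_lt[OF st] step_lop[OF st] r by auto
qed

lemma Hne_persist: assumes st: "U_step \<delta> x c c'" and M: "I_misc c" and nq: "x \<noteq> q \<or> pc (loc c x) \<noteq> 3 \<or> lt (loc c x) \<noteq> \<tau>"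
  and h: "Hh c q \<noteq> (\<tau>, NULL)" shows "Hh c' q \<noteq> (\<tau>, NULL)"
proof (cases "pc (loc c x) = 3")
  case True then show ?thesis using step_H[OF st] nq h by auto
next
  case False then show ?thesis using H_back[OF M st False] h by blast
qed

lemma INFM_le: "(\<exists>\<^sub>\<infinity>n. P n) \<Longrightarrow> \<exists>n\<ge>(m::nat). P n"
proof (rule ccontr)
  assume a: "\<exists>\<^sub>\<infinity>n. P n" and b: "\<not> (\<exists>n\<ge>m. P n)"
  then have "\<forall>n\<in>Collect P. n \<le> m" by (auto simp: not_le intro: less_imp_le)
  then have "finite (Collect P)" unfolding finite_nat_set_iff_bounded_le by blast
  then show False using a unfolding frequently_cofinite by blast
qed

lemma not_INFM: "\<not> (\<exists>\<^sub>\<infinity>n. P n) \<Longrightarrow> \<exists>b. \<forall>n\<ge>(b::nat). \<not> P n"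
proof -
  assume "\<not> (\<exists>\<^sub>\<infinity>n. P n)"
  then obtain m where m: "\<forall>n\<in>Collect P. n \<le> m" unfolding frequently_cofinite finite_nat_set_iff_bounded_le by blast
  show "\<exists>b. \<forall>n\<ge>(b::nat). \<not> P n"
  proof (intro exI allI impI)
    fix n assume "Suc m \<le> n" then show "\<not> P n" using m by auto
  qed
qed

locale ex =
  fixes \<delta> :: "('q \<times> 'o \<times> 'q \<times> 'r) set" and E :: "nat \<Rightarrow> ('p,'o,'q,'r) config" and sched :: "nat \<Rightarrow> 'p"
  assumes stp: "\<And>k. U_step \<delta> (sched k) (E k) (E (Suc k))"
  and inv0: "Inv (E 0)"
  and pc0: "\<And>x. pc (loc (E 0) x) = 1"
begin

lemma inv: "Inv (E k)"
  by (induction k) (auto intro: Inv_step[OF _ stp] inv0)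

lemma invs: "I_lt (E k)" "I_U (E k)" "I_J (E k)" "I_misc (E k)" "I_H (E k)"
  using inv[of k] unfolding Inv_def by auto

lemma oth: "sched k \<noteq> x \<Longrightarrow> loc (E (Suc k)) x = loc (E k) x"
  using step_other[OF stp] by metis

lemma Cc_le: "k \<le> k' \<Longrightarrow> Cc (E k) \<le> Cc (E k')"
proof (induction k' rule: dec_induct)
  case base then show ?case by simp
next
  case (step n) then show ?case using Cc_mono[OF stp[of n]] by simp
qed

lemma stay: "k \<le> j \<Longrightarrow> (\<forall>m. k \<le> m \<and> m < j \<longrightarrow> sched m \<noteq> x) \<Longrightarrow> loc (E j) x = loc (E k) x"
proof (induction j rule: dec_induct)
  case base then show ?case by simp
next
  case (step n) then show ?case using oth[of n x] by simp
qed

lemma active_before: "pc (loc (E k) x) \<noteq> 1 \<Longrightarrow> \<exists>m<k. sched m = x"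
proof (induction k)
  case 0 then show ?case using pc0 by simp
next
  case (Suc k)
  show ?case
  proof (cases "sched k = x")
    case True then show ?thesis by auto
  next
    case False then show ?thesis using Suc oth[OF False] by (metis less_SucI)
  qed
qed

lemma nxt: assumes inf: "\<exists>\<^sub>\<infinity>j. sched j = x"
  shows "\<exists>j\<ge>k. sched j = x \<and> loc (E j) x = loc (E k) x \<and> (\<forall>m. k \<le> m \<and> m < j \<longrightarrow> sched m \<noteq> x)"
proof -
  from inf obtain j0 where "j0 \<ge> k" "sched j0 = x" using INFM_le by blast
  define j where "j = (LEAST j. k \<le> j \<and> sched j = x)"
  have j: "k \<le> j \<and> sched j = x" unfolding j_def by (rule LeastI[of _ j0]) (use \<open>j0 \<ge> k\<close> \<open>sched j0 = x\<close> in auto)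
  have m: "\<forall>m. k \<le> m \<and> m < j \<longrightarrow> sched m \<noteq> x"
    using not_less_Least unfolding j_def by blast
  show ?thesis using j m stay[of k j x] by blast
qed

lemma ns: assumes inf: "\<exists>\<^sub>\<infinity>j. sched j = x"
  shows "\<exists>j'>k. sched j' = x \<and> loc (E j') x = loc (E (Suc k)) x"
  using nxt[OF inf, of "Suc k"] by (metis Suc_le_eq)

end

locale starve = ex +
  fixes p :: 'p and t :: nat and k1 :: nat and o0 :: 'o
  assumes infp: "\<exists>\<^sub>\<infinity>j. sched j = p"
  and rng: "\<And>j. k1 \<le> j \<Longrightarrow> pc (loc (E j) p) \<in> {4..13}"
  and ltp: "\<And>j. k1 \<le> j \<Longrightarrow> lt (loc (E j) p) = t"
  and lopp: "\<And>j. k1 \<le> j \<Longrightarrow> lop (loc (E j) p) = o0"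
  and pend: "\<And>j. k1 \<le> j \<Longrightarrow> Hh (E j) p = (t, NULL)"
begin

abbreviation L where "L j \<equiv> loc (E j) p"

lemma stp_p: "sched j = p \<Longrightarrow> U_step \<delta> p (E j) (E (Suc j))"
  using stp[of j] by simp

lemma nsp: "\<exists>j'>j. sched j' = p \<and> L j' = L (Suc j)"
  using ns[OF infp] by blast

lemma nxtp: "\<exists>j'\<ge>j. sched j' = p \<and> L j' = L j"
  using nxt[OF infp] by blast

lemma reach4: "k1 \<le> k \<Longrightarrow> \<exists>j\<ge>k. sched j = p \<and> pc (L j) = 4"
proof (induction "14 - pc (L k)" arbitrary: k rule: less_induct)
  case less
  obtain j0 where j0: "j0 \<ge> k" "sched j0 = p" "L j0 = L k" using nxtp by blast
  show ?case
  proof (cases "pc (L k) = 4")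
    case True then show ?thesis using j0 by auto
  next
    case False
    then have r: "pc (L j0) \<in> {5..13}" using rng[OF less.prems] j0 by auto
    from pc_next[OF stp_p[OF j0(2)] r]
    consider "pc (L (Suc j0)) = 4" | "pc (L j0) < pc (L (Suc j0)) \<and> pc (L (Suc j0)) \<le> 13" by blast
    then show ?thesis
    proof cases
      case 1
      obtain j where "j \<ge> Suc j0" "sched j = p" "L j = L (Suc j0)" using nxtp by blast
      then show ?thesis using 1 j0 by (intro exI[of _ j]) auto
    next
      case 2
      have "14 - pc (L (Suc j0)) < 14 - pc (L k)" using 2 j0 by auto
      moreover have "k1 \<le> Suc j0" using j0 less.prems by auto
      ultimately obtain j where "j \<ge> Suc j0" "sched j = p" "pc (L j) = 4" using less.hyps by blast
      then show ?thesis using j0 by (intro exI[of _ j]) auto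
    qed
  qed
qed

lemma p_iter: assumes "k1 \<le> k"
  shows "\<exists>j5 j6 j7 j8 j9 j10. k \<le> j5 \<and> j5 < j6 \<and> j6 < j7 \<and> j7 < j8 \<and> j8 < j9 \<and> j9 < j10 \<and>
    sched j5 = p \<and> sched j6 = p \<and> sched j7 = p \<and> sched j8 = p \<and> sched j9 = p \<and> sched j10 = p \<and>
    pc (L j5) = 5 \<and> pc (L j7) = 7 \<and> pc (L j8) = 8 \<and> pc (L j9) = 9 \<and> pc (L j10) = 10 \<and>
    ts (L j10) = fst (Ss (E j5)) \<and> ss (L j10) = fst (snd (Ss (E j5))) \<and>
    rs (L j10) = fst (snd (snd (Ss (E j5)))) \<and> rps (L j10) = snd (snd (snd (Ss (E j5)))) \<and>
    tp (L j10) = fst (Aa (E j8)) \<and> opp (L j10) = fst (snd (Aa (E j8))) \<and> rpp (L j10) = snd (snd (Aa (E j8))) \<and>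
    th (L j10) = fst (deref (E j9) (snd (snd (Aa (E j8))))) \<and> rh (L j10) = snd (deref (E j9) (snd (snd (Aa (E j8)))))"
proof -
  obtain j4 where j4: "j4 \<ge> k" "sched j4 = p" "pc (L j4) = 4" using reach4[OF assms] by blast
  have "Hh (E j4) p = (lt (L j4), NULL)" using pend[of j4] ltp[of j4] j4 assms by simp
  then have l5: "L (Suc j4) = (L j4)\<lparr>pc := 5\<rparr>" using step_loc(4)[OF stp_p[OF j4(2)]] j4 by simp
  obtain j5 where j5: "j5 > j4" "sched j5 = p" "L j5 = L (Suc j4)" using nsp by blast
  have p5: "pc (L j5) = 5" using j5 l5 by simp
  have l6: "L (Suc j5) = (L j5)\<lparr>pc := 6, ts := fst (Ss (E j5)), ss := fst (snd (Ss (E j5))),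
            rs := fst (snd (snd (Ss (E j5)))), rps := snd (snd (snd (Ss (E j5))))\<rparr>"
    using step_loc(5)[OF stp_p[OF j5(2)] p5] .
  obtain j6 where j6: "j6 > j5" "sched j6 = p" "L j6 = L (Suc j5)" using nsp by blast
  have p6: "pc (L j6) = 6" using j6 l6 by simp
  have l7: "L (Suc j6) = (L j6)\<lparr>pc := 7\<rparr>" using step_loc(6)[OF stp_p[OF j6(2)] p6] .
  obtain j7 where j7: "j7 > j6" "sched j7 = p" "L j7 = L (Suc j6)" using nsp by blast
  have p7: "pc (L j7) = 7" using j7 l7 by simp
  have l8: "L (Suc j7) = (L j7)\<lparr>pc := 8\<rparr>" using step_loc(7)[OF stp_p[OF j7(2)] p7] .
  obtain j8 where j8: "j8 > j7" "sched j8 = p" "L j8 = L (Suc j7)" using nsp by blast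
  have p8: "pc (L j8) = 8" using j8 l8 by simp
  have l9: "L (Suc j8) = (L j8)\<lparr>pc := 9, tp := fst (Aa (E j8)), opp := fst (snd (Aa (E j8))), rpp := snd (snd (Aa (E j8)))\<rparr>"
    using step_loc(8)[OF stp_p[OF j8(2)] p8] .
  obtain j9 where j9: "j9 > j8" "sched j9 = p" "L j9 = L (Suc j8)" using nsp by blast
  have p9: "pc (L j9) = 9" using j9 l9 by simp
  have l10: "L (Suc j9) = (L j9)\<lparr>pc := 10, th := fst (deref (E j9) (rpp (L j9))), rh := snd (deref (E j9) (rpp (L j9)))\<rparr>"
    using step_loc(9)[OF stp_p[OF j9(2)] p9] .
  obtain j10 where j10: "j10 > j9" "sched j10 = p" "L j10 = L (Suc j9)" using nsp by blast
  show ?thesis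
    apply (rule exI[of _ j5], rule exI[of _ j6], rule exI[of _ j7], rule exI[of _ j8], rule exI[of _ j9], rule exI[of _ j10])
    using j4 j5 j6 j7 j8 j9 j10 p5 p7 p8 p9 l6 l7 l8 l9 l10 by simp
qed

end

context starve begin

definition pe where "pe = (t, Some o0, HP p)"

lemma tbounds: "k1 \<le> k \<Longrightarrow> 0 < t \<and> t < Cc (E k)"
  using invs(1)[of k] rng[of k] ltp[of k] unfolding I_lt_def by force

end

locale starve2 = starve +
  fixes N1 :: nat
  assumes N1k: "k1 \<le> N1"
  and Nw: "\<And>k x. N1 \<le> k \<Longrightarrow> sched k = x \<Longrightarrow> x \<noteq> p \<Longrightarrow> pc (loc (E k) x) \<in> {3..14} \<Longrightarrow> t < lt (loc (E k) x)"
begin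

lemma writer: assumes "N1 \<le> k" "pc (loc (E k) (sched k)) \<in> {7,13}"
  shows "lt (loc (E k) (sched k)) = t \<and> sched k = p \<or> t < lt (loc (E k) (sched k))"
proof (cases "sched k = p")
  case True then show ?thesis using ltp[of k] assms N1k by auto
next
  case False then show ?thesis using Nw[OF assms(1) refl False] assms(2) by auto
qed

lemma L1: assumes k: "N1 \<le> k" and f: "fst (Aa (E k)) = t" shows "Aa (E (Suc k)) = Aa (E k)"
proof -
  let ?x = "sched k"
  note sA = step_A[OF stp[of k]]
  show ?thesis
  proof (cases "pc (loc (E k) ?x) = 7")
    case True
    then show ?thesis using sA writer[OF k] f by auto
  next
    case n7: False
    show ?thesis
    proof (cases "pc (loc (E k) ?x) = 13 \<and> Aa (E k) = (tp (loc (E k) ?x), opp (loc (E k) ?x), rpp (loc (E k) ?x))")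
      case True
      have t0: "0 < t" using tbounds N1k k by auto
      have nn: "snd (snd (Aa (E k))) \<noteq> HNoop" using invs(4)[of k] f t0 unfolding I_misc_def by auto
      then obtain y where y: "snd (snd (Aa (E k))) = HP y" by (cases "snd (snd (Aa (E k)))") auto
      have "(t, HP y) \<in> pv (E k)" using pv_A[of "E k"] y f by simp
      then have "y = p" using J_D(3)[OF invs(3)] rng[of k] ltp[of k] N1k k by force
      then have "rpp (loc (E k) ?x) = HP p" "tp (loc (E k) ?x) = t" using True y f by auto
      then have "Hh (E k) p \<noteq> (t, NULL)" using invs(5)[of k] True unfolding I_H_def by metis
      then show ?thesis using pend[of k] N1k k by simp
    next
      case False then show ?thesis using sA n7 by auto
    qed
  qed
qed

lemma L2: assumes k: "N1 \<le> k" and f: "fst (Aa (E k)) < t"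
  shows "Aa (E (Suc k)) = Aa (E k) \<or> t \<le> fst (Aa (E (Suc k)))"
  using step_A[OF stp[of k]] writer[OF k] f by (auto split: if_splits)

lemma L3: assumes k: "N1 \<le> k" and f: "t \<le> fst (Aa (E k))"
  shows "t \<le> fst (Aa (E (Suc k)))"
  using step_A[OF stp[of k]] writer[OF k] f by (auto split: if_splits)

lemma L7: assumes k: "N1 \<le> k" and s: "sched k = p" and p7: "pc (L k) = 7"
  shows "fst (Aa (E (Suc k))) \<le> t"
  using step_A[OF stp[of k]] s p7 ltp[of k] N1k k by auto

lemma L13: assumes k: "N1 \<le> k" and s: "sched k = p" and p13: "pc (L k) = 13"
  and a: "Aa (E k) = (tp (L k), opp (L k), rpp (L k))"
  shows "Aa (E (Suc k)) = pe"
  using step_A[OF stp[of k]] s p13 a ltp[of k] lopp[of k] N1k k unfolding pe_def by auto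

lemma A_stable: "\<exists>M'\<ge>N1. \<forall>k\<ge>M'. Aa (E k) = Aa (E M')"
proof (cases "\<forall>k\<ge>N1. fst (Aa (E k)) < t")
  case True
  have "\<forall>k\<ge>N1. Aa (E k) = Aa (E N1)"
  proof (intro allI impI)
    fix k assume "N1 \<le> k" then show "Aa (E k) = Aa (E N1)"
    proof (induction k rule: dec_induct)
      case base then show ?case by simp
    next
      case (step n)
      have "fst (Aa (E (Suc n))) < t" using True step by auto
      then show ?case using L2[OF step(1)] True step by fastforce
    qed
  qed
  then show ?thesis by blast
next
  case False
  then obtain k' where k': "N1 \<le> k'" "t \<le> fst (Aa (E k'))" by (auto simp: not_less)
  have ge: "\<forall>k\<ge>k'. t \<le> fst (Aa (E k))"
  proof (intro allI impI)
    fix k assume "k' \<le> k" then show "t \<le> fst (Aa (E k))"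
    proof (induction k rule: dec_induct)
      case base then show ?case using k' by simp
    next
      case (step n) then show ?case using L3[of n] k' by simp
    qed
  qed
  obtain j5 j6 j7 where j: "k' \<le> j5" "j5 < j6" "j6 < j7" "sched j7 = p" "pc (L j7) = 7"
    using p_iter[of k'] N1k k' by auto
  have "fst (Aa (E (Suc j7))) = t" using L7[of j7] ge j k' by (meson le_antisym le_trans less_imp_le le_SucI)
  have "\<forall>k\<ge>Suc j7. Aa (E k) = Aa (E (Suc j7))"
  proof (intro allI impI)
    fix k assume "Suc j7 \<le> k" then show "Aa (E k) = Aa (E (Suc j7))"
    proof (induction k rule: dec_induct)
      case base then show ?case by simp
    next
      case (step n)
      have "N1 \<le> n" using step j k' by simp
      then show ?case using L1[of n] step \<open>fst (Aa (E (Suc j7))) = t\<close> by simp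
    qed
  qed
  moreover have "N1 \<le> Suc j7" using j k' by simp
  ultimately show ?thesis by blast
qed

end

locale starve3 = starve2 +
  fixes M' :: nat and \<phi>
  assumes MN: "N1 \<le> M'"
  and Aphi: "\<And>k. M' \<le> k \<Longrightarrow> Aa (E k) = \<phi>"
begin

lemma Mk1: "k1 \<le> M'" using MN N1k by simp

definition Pend where "Pend k \<longleftrightarrow> (\<exists>q. snd (snd \<phi>) = HP q \<and> Hh (E k) q = (fst \<phi>, NULL))"

lemma notPend_persist: assumes k: "M' \<le> k" and np: "\<not> Pend k" shows "\<not> Pend (Suc k)"
proof
  assume ps: "Pend (Suc k)"
  then obtain q where q: "snd (snd \<phi>) = HP q" "Hh (E (Suc k)) q = (fst \<phi>, NULL)" unfolding Pend_def by blast
  have h: "Hh (E k) q \<noteq> (fst \<phi>, NULL)" using np q unfolding Pend_def by blast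
  have "sched k \<noteq> q \<or> pc (loc (E k) (sched k)) \<noteq> 3 \<or> lt (loc (E k) (sched k)) \<noteq> fst \<phi>"
  proof (rule ccontr)
    assume "\<not> ?thesis"
    then have a: "sched k = q" "pc (loc (E k) q) = 3" "lt (loc (E k) q) = fst \<phi>" by auto
    have "(fst \<phi>, HP q) \<in> pv (E k)" using pv_A[of "E k"] Aphi[OF k] q by simp
    then have "fst \<phi> < lt (loc (E k) q)" using J_D(2)[OF invs(3)] a by blast
    then show False using a by simp
  qed
  then have "Hh (E (Suc k)) q \<noteq> (fst \<phi>, NULL)" using Hne_persist[OF stp[of k] invs(4) _ h] by blast
  then show False using q by simp
qed

lemma pending: "\<exists>q. snd (snd \<phi>) = HP q \<and> (\<forall>k\<ge>M'. Hh (E k) q = (fst \<phi>, NULL))"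
proof (cases "\<phi> = pe")
  case True then show ?thesis using pend Mk1 unfolding pe_def by auto
next
  case npe: False
  have all: "\<forall>k\<ge>M'. Pend k"
  proof (rule ccontr)
    assume "\<not> ?thesis"
    then obtain k' where k': "M' \<le> k'" "\<not> Pend k'" by blast
    have np: "\<forall>k\<ge>k'. \<not> Pend k"
    proof (intro allI impI)
      fix k assume "k' \<le> k" then show "\<not> Pend k"
      proof (induction k rule: dec_induct)
        case base then show ?case using k' by simp
      next
        case (step n) then show ?case using notPend_persist[of n] k' by simp
      qed
    qed
    obtain j5 j6 j7 j8 j9 j10 where j: "k' \<le> j5" "j5 < j6" "j6 < j7" "j7 < j8" "j8 < j9" "j9 < j10"
      "sched j10 = p" "pc (L j10) = 10"
      "tp (L j10) = fst (Aa (E j8))" "opp (L j10) = fst (snd (Aa (E j8)))" "rpp (L j10) = snd (snd (Aa (E j8)))"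
      "th (L j10) = fst (deref (E j9) (snd (snd (Aa (E j8)))))" "rh (L j10) = snd (deref (E j9) (snd (snd (Aa (E j8)))))"
      using p_iter[of k'] Mk1 k' by auto
    have A8: "Aa (E j8) = \<phi>" using Aphi j k' by simp
    have npj: "\<not> Pend j9" using np j by simp
    have ne: "(th (L j10), rh (L j10)) \<noteq> (tp (L j10), NULL)"
    proof (cases "snd (snd \<phi>)")
      case HNoop then show ?thesis using j A8 unfolding deref_def by simp
    next
      case (HP q) then show ?thesis using j A8 npj unfolding deref_def Pend_def by simp
    qed
    have l11: "L (Suc j10) = (L j10)\<lparr>pc := 13\<rparr>" using step_loc(10)[OF stp_p[OF j(7)] j(8)] ne by simp
    obtain j13 where j13: "j13 > j10" "sched j13 = p" "L j13 = L (Suc j10)" using nsp by blast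
    have "Aa (E j13) = (tp (L j13), opp (L j13), rpp (L j13))"
      using Aphi[of j13] j13 l11 j A8 k' by simp
    then have "Aa (E (Suc j13)) = pe" using L13[of j13] j13 l11 j k' MN by simp
    moreover have "Aa (E (Suc j13)) = \<phi>" using Aphi j13 j k' by simp
    ultimately show False using npe by simp
  qed
  then obtain q where q: "snd (snd \<phi>) = HP q" using Pend_def by blast
  have "\<forall>k\<ge>M'. Hh (E k) q = (fst \<phi>, NULL)" using all q unfolding Pend_def by auto
  then show ?thesis using q by blast
qed

end

lemma pc_into9: assumes "U_step \<delta> x c c'" "pc (loc c' x) \<in> {9..13}" shows "pc (loc c x) \<in> {8,9,10,11}"
  using assms unfolding U_step_def Let_def by (auto split: if_splits prod.splits)

lemma tp_same: assumes "U_step \<delta> x c c'" "pc (loc c x) \<in> {9,10,11}"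
  shows "tp (loc c' x) = tp (loc c x) \<and> rpp (loc c' x) = rpp (loc c x)"
  using assms unfolding U_step_def Let_def by (auto split: if_splits prod.splits)

context ex begin
lemma IH1: "pc (loc (E k) x) \<in> {7..12} \<Longrightarrow> rps (loc (E k) x) = HP q \<Longrightarrow> Hh (E k) q \<noteq> (ts (loc (E k) x), NULL)"
  using invs(5)[of k] unfolding I_H_def by blast
end

context starve begin
lemma p_iter_obt: assumes "k1 \<le> k"
  obtains j5 j6 j7 j8 j9 j10 where "k \<le> j5" "j5 < j6" "j6 < j7" "j7 < j8" "j8 < j9" "j9 < j10"
    "sched j5 = p" "sched j6 = p" "sched j7 = p" "sched j8 = p" "sched j9 = p" "sched j10 = p"
    "pc (L j5) = 5" "pc (L j7) = 7" "pc (L j8) = 8" "pc (L j9) = 9" "pc (L j10) = 10"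
    "ts (L j10) = fst (Ss (E j5))" "ss (L j10) = fst (snd (Ss (E j5)))"
    "rs (L j10) = fst (snd (snd (Ss (E j5))))" "rps (L j10) = snd (snd (snd (Ss (E j5))))"
    "tp (L j10) = fst (Aa (E j8))" "opp (L j10) = fst (snd (Aa (E j8)))" "rpp (L j10) = snd (snd (Aa (E j8)))"
    "th (L j10) = fst (deref (E j9) (snd (snd (Aa (E j8)))))" "rh (L j10) = snd (deref (E j9) (snd (snd (Aa (E j8)))))"
  using p_iter[OF assms] by blast
end

locale starve4 = starve3 +
  fixes q
  assumes qptr: "snd (snd \<phi>) = HP q"
  and qpend: "\<And>k. M' \<le> k \<Longrightarrow> Hh (E k) q = (fst \<phi>, NULL)"
begin

lemma psi: assumes k: "M' \<le> k" and s: "fst (Ss (E k)) = fst \<phi>" "snd (snd (snd (Ss (E k)))) = HP q"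
  shows False
proof -
  have const: "\<forall>m. Ss (E (k + m)) = Ss (E k)"
  proof
    fix m show "Ss (E (k + m)) = Ss (E k)"
    proof (induction m)
      case 0 then show ?case by simp
    next
      case (Suc m)
      let ?x = "sched (k + m)"
      let ?l = "loc (E (k + m)) ?x"
      note sS = step_S[OF stp[of "k + m"]]
      show ?case
      proof (cases "pc ?l = 12 \<and> Ss (E (k + m)) = (ts ?l, ss ?l, rs ?l, rps ?l)")
        case True
        then have "rps ?l = HP q" "ts ?l = fst \<phi>" using Suc s by auto
        then have "Hh (E (k + m)) q \<noteq> (fst \<phi>, NULL)" using IH1[of "k + m" ?x q] True by simp
        then show ?thesis using qpend[of "k + m"] k by simp
      next
        case False then show ?thesis using sS Suc by auto
      qed
    qed
  qed
  obtain j5 j6 j7 j8 j9 j10 where j: "k \<le> j5" "j5 < j6" "j6 < j7" "j7 < j8" "j8 < j9" "j9 < j10"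
      "sched j10 = p" "pc (L j10) = 10"
      "ts (L j10) = fst (Ss (E j5))" "rps (L j10) = snd (snd (snd (Ss (E j5))))"
      using p_iter[of k] Mk1 k by auto
  have "Ss (E j5) = Ss (E k)" using const[rule_format, of "j5 - k"] j by simp
  then have "ts (L j10) = fst \<phi>" "rps (L j10) = HP q" using j s by auto
  then have "Hh (E j10) q \<noteq> (fst \<phi>, NULL)" using IH1[of j10 p q] j by simp
  then show False using qpend[of j10] j k by simp
qed

definition X0 where "X0 = {x. pc (loc (E M') x) \<in> {9..13}}"

definition ST where "ST k \<longleftrightarrow> (\<forall>x. pc (loc (E k) x) \<in> {9..13} \<longrightarrow>
   (tp (loc (E k) x) = fst \<phi> \<and> rpp (loc (E k) x) = HP q) \<or>
   (x \<in> X0 \<and> (\<forall>m. M' \<le> m \<and> m < k \<and> sched m = x \<longrightarrow> pc (loc (E m) x) \<in> {9,10,11})))"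

lemma ST_all: "M' \<le> k \<Longrightarrow> ST k"
proof (induction k rule: dec_induct)
  case base then show ?case unfolding ST_def X0_def by auto
next
  case (step n)
  show ?case unfolding ST_def
  proof (intro allI impI)
    fix x assume a: "pc (loc (E (Suc n)) x) \<in> {9..13}"
    show "(tp (loc (E (Suc n)) x) = fst \<phi> \<and> rpp (loc (E (Suc n)) x) = HP q) \<or>
      (x \<in> X0 \<and> (\<forall>m. M' \<le> m \<and> m < Suc n \<and> sched m = x \<longrightarrow> pc (loc (E m) x) \<in> {9,10,11}))"
    proof (cases "sched n = x")
      case False
      then have l: "loc (E (Suc n)) x = loc (E n) x" using oth by simp
      have "pc (loc (E n) x) \<in> {9..13}" using a l by simp
      then have "(tp (loc (E n) x) = fst \<phi> \<and> rpp (loc (E n) x) = HP q) \<or>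
        (x \<in> X0 \<and> (\<forall>m. M' \<le> m \<and> m < n \<and> sched m = x \<longrightarrow> pc (loc (E m) x) \<in> {9,10,11}))"
        using step(3) unfolding ST_def by blast
      then show ?thesis using l False less_Suc_eq by auto
    next
      case True
      note st = stp[of n]
      have c: "pc (loc (E n) x) \<in> {8,9,10,11}"
        using pc_into9[OF st] a True by simp
      show ?thesis
      proof (cases "pc (loc (E n) x) = 8")
        case True
        then show ?thesis using step_loc(8)[OF st] \<open>sched n = x\<close> Aphi[OF step(1)] qptr by auto
      next
        case n8: False
        have same: "tp (loc (E (Suc n)) x) = tp (loc (E n) x)" "rpp (loc (E (Suc n)) x) = rpp (loc (E n) x)"
          using c n8 tp_same[OF st] \<open>sched n = x\<close> by auto
        have "pc (loc (E n) x) \<in> {9..13}" using c n8 by auto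
        then have "(tp (loc (E n) x) = fst \<phi> \<and> rpp (loc (E n) x) = HP q) \<or>
          (x \<in> X0 \<and> (\<forall>m. M' \<le> m \<and> m < n \<and> sched m = x \<longrightarrow> pc (loc (E m) x) \<in> {9,10,11}))"
          using step(3) unfolding ST_def by blast
        then show ?thesis using same c n8 less_Suc_eq by auto
      qed
    qed
  qed
qed

lemma chg: assumes k: "M' \<le> k" and ne: "Ss (E (Suc k)) \<noteq> Ss (E k)"
  shows "sched k \<in> X0 \<and> pc (loc (E k) (sched k)) = 12 \<and>
     (\<forall>m. M' \<le> m \<and> m < k \<and> sched m = sched k \<longrightarrow> pc (loc (E m) (sched k)) \<in> {9,10,11})"
proof -
  let ?x = "sched k"
  let ?l = "loc (E k) ?x"
  have c: "pc ?l = 12" "Ss (E (Suc k)) = (tp ?l, sp ?l, Val (rp ?l), rpp ?l)"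
    using step_S[OF stp[of k]] ne by (auto split: if_splits)
  have "\<not> (tp ?l = fst \<phi> \<and> rpp ?l = HP q)"
  proof
    assume "tp ?l = fst \<phi> \<and> rpp ?l = HP q"
    then show False using psi[of "Suc k"] c k by simp
  qed
  moreover have "(tp ?l = fst \<phi> \<and> rpp ?l = HP q) \<or>
   (?x \<in> X0 \<and> (\<forall>m. M' \<le> m \<and> m < k \<and> sched m = ?x \<longrightarrow> pc (loc (E m) ?x) \<in> {9,10,11}))"
    using ST_all[OF k] c(1) unfolding ST_def by simp
  ultimately show ?thesis using c(1) by blast
qed

lemma finX0: "finite X0"
proof -
  have "X0 \<subseteq> sched ` {..<M'}"
  proof
    fix x assume "x \<in> X0"
    then have "pc (loc (E M') x) \<noteq> 1" unfolding X0_def by auto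
    then obtain m where "m < M'" "sched m = x" using active_before by blast
    then show "x \<in> sched ` {..<M'}" by auto
  qed
  then show ?thesis using finite_subset by blast
qed

lemma S_stable: "\<exists>M3\<ge>M'. \<forall>k\<ge>M3. Ss (E k) = Ss (E M3)"
proof -
  define K where "K = {k. M' \<le> k \<and> Ss (E (Suc k)) \<noteq> Ss (E k)}"
  have chgK: "\<And>k. k \<in> K \<Longrightarrow> sched k \<in> X0 \<and> pc (loc (E k) (sched k)) = 12 \<and>
     (\<forall>m. M' \<le> m \<and> m < k \<and> sched m = sched k \<longrightarrow> pc (loc (E m) (sched k)) \<in> {9,10,11})"
    using chg unfolding K_def by blast
  have KM: "\<And>k. k \<in> K \<Longrightarrow> M' \<le> k" unfolding K_def by blast
  have lt_case: "False" if a: "a \<in> K" and b: "b \<in> K" and e: "sched a = sched b" and ab: "a < b" for a b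
  proof -
    have "\<forall>m. M' \<le> m \<and> m < b \<and> sched m = sched b \<longrightarrow> pc (loc (E m) (sched b)) \<in> {9,10,11}"
      using chgK[OF b] by blast
    then have "pc (loc (E a) (sched b)) \<in> {9,10,11}" using KM[OF a] ab e by blast
    moreover have "pc (loc (E a) (sched a)) = 12" using chgK[OF a] by blast
    ultimately show False using e by simp
  qed
  have inj: "inj_on sched K"
  proof (rule inj_onI)
    fix a b assume a: "a \<in> K" and b: "b \<in> K" and e: "sched a = sched b"
    show "a = b"
    proof (rule ccontr)
      assume "a \<noteq> b"
      then consider "a < b" | "b < a" by linarith
      then show False
      proof cases
        case 1 then show False using lt_case[OF a b e] by blast
      next
        case 2 then show False using lt_case[OF b a e[symmetric]] by blast
      qed
    qed
  qed
  have "sched ` K \<subseteq> X0" using chgK by blast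
  then have "finite (sched ` K)" using finX0 finite_subset by blast
  then have "finite K" using inj finite_imageD by blast
  then obtain B where B: "\<forall>k\<in>K. k < B" using finite_nat_set_iff_bounded by blast
  define M3 where "M3 = max M' B"
  have "\<forall>k\<ge>M3. Ss (E k) = Ss (E M3)"
  proof (intro allI impI)
    fix k assume "M3 \<le> k" then show "Ss (E k) = Ss (E M3)"
    proof (induction k rule: dec_induct)
      case base then show ?case by simp
    next
      case (step n)
      have nB: "\<not> n < B" using step(1) unfolding M3_def by simp
      have "n \<notin> K" using B nB by blast
      moreover have "M' \<le> n" using step(1) unfolding M3_def by simp
      ultimately have "Ss (E (Suc n)) = Ss (E n)" unfolding K_def by blast
      then show ?case using step(3) by simp
    qed
  qed
  moreover have "M' \<le> M3" unfolding M3_def by simp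
  ultimately show ?thesis by blast
qed

lemma contradiction: False
proof -
  obtain M3 where M3: "M3 \<ge> M'" "\<forall>k\<ge>M3. Ss (E k) = Ss (E M3)" using S_stable by blast
  have kM3: "k1 \<le> M3" using Mk1 M3 by simp
  obtain j5 j6 j7 j8 j9 j10 where j: "M3 \<le> j5" "j5 < j6" "j6 < j7" "j7 < j8" "j8 < j9" "j9 < j10"
    "sched j5 = p" "sched j6 = p" "sched j7 = p" "sched j8 = p" "sched j9 = p" "sched j10 = p"
    "pc (L j5) = 5" "pc (L j7) = 7" "pc (L j8) = 8" "pc (L j9) = 9" "pc (L j10) = 10"
    "ts (L j10) = fst (Ss (E j5))" "ss (L j10) = fst (snd (Ss (E j5)))"
    "rs (L j10) = fst (snd (snd (Ss (E j5))))" "rps (L j10) = snd (snd (snd (Ss (E j5))))"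
    "tp (L j10) = fst (Aa (E j8))" "opp (L j10) = fst (snd (Aa (E j8)))" "rpp (L j10) = snd (snd (Aa (E j8)))"
    "th (L j10) = fst (deref (E j9) (snd (snd (Aa (E j8)))))" "rh (L j10) = snd (deref (E j9) (snd (snd (Aa (E j8)))))"
    by (rule p_iter_obt[OF kM3])
  have A8: "Aa (E j8) = \<phi>" using Aphi j M3(1) by simp
  have H9: "Hh (E j9) q = (fst \<phi>, NULL)" using qpend[of j9] j M3(1) by simp
  have eq: "(th (L j10), rh (L j10)) = (tp (L j10), NULL)" using j A8 H9 qptr unfolding deref_def by simp
  have l11: "L (Suc j10) = (L j10)\<lparr>pc := 11\<rparr>" using step_loc(10)[OF stp_p[OF j(12)] j(17)] eq by simp
  obtain j11 where j11: "j11 > j10" "sched j11 = p" "L j11 = L (Suc j10)" using nsp by blast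
  have p11: "pc (L j11) = 11" using j11 l11 by simp
  obtain o1 s1 r1 where l12: "L (Suc j11) = (L j11)\<lparr>pc := 12, sp := s1, rp := r1\<rparr>"
    using step_loc11[OF stp_p[OF j11(2)] p11] by blast
  obtain j12 where j12: "j12 > j11" "sched j12 = p" "L j12 = L (Suc j11)" using nsp by blast
  have "M3 \<le> j12" using j j11 j12 by simp
  then have S12: "Ss (E j12) = Ss (E j5)" using M3(2) j(1) by metis
  have loc12: "L j12 = (L j10)\<lparr>pc := 11, pc := 12, sp := s1, rp := r1\<rparr>" using j12 l12 j11 l11 by simp
  have "Ss (E j12) = (ts (L j12), ss (L j12), rs (L j12), rps (L j12))" using S12 loc12 j by simp
  moreover have "pc (L j12) = 12" using loc12 by simp
  ultimately have "Ss (E (Suc j12)) = (tp (L j12), sp (L j12), Val (rp (L j12)), rpp (L j12))"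
    using step_S[OF stp_p[OF j12(2)]] by simp
  then have "fst (Ss (E (Suc j12))) = fst \<phi>" "snd (snd (snd (Ss (E (Suc j12))))) = HP q"
    using loc12 j A8 qptr by auto
  then show False using psi[of "Suc j12"] j j11 j12 M3(1) by simp
qed

end

context starve2 begin
lemma starve_false: False
proof -
  obtain M' where M': "N1 \<le> M'" "\<forall>k\<ge>M'. Aa (E k) = Aa (E M')" using A_stable by blast
  interpret s3: starve3 \<delta> E sched p t k1 o0 N1 M' "Aa (E M')"
    by unfold_locales (use M' in blast)+
  obtain q where q: "snd (snd (Aa (E M'))) = HP q" "\<forall>k\<ge>M'. Hh (E k) q = (fst (Aa (E M')), NULL)"
    using s3.pending by blast
  interpret s4: starve4 \<delta> E sched p t k1 o0 N1 M' "Aa (E M')" q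
    by unfold_locales (use q in blast)+
  show False by (rule s4.contradiction)
qed
end

context ex begin

lemma reach4_ex: assumes inf: "\<exists>\<^sub>\<infinity>j. sched j = x" and rg: "\<And>j. k1 \<le> j \<Longrightarrow> pc (loc (E j) x) \<in> {4..13}"
  shows "k1 \<le> k \<Longrightarrow> \<exists>j\<ge>k. sched j = x \<and> pc (loc (E j) x) = 4"
proof (induction "14 - pc (loc (E k) x)" arbitrary: k rule: less_induct)
  case less
  obtain j0 where j0: "j0 \<ge> k" "sched j0 = x" "loc (E j0) x = loc (E k) x" using nxt[OF inf] by blast
  show ?case
  proof (cases "pc (loc (E k) x) = 4")
    case True then show ?thesis using j0 by auto
  next
    case False
    then have r: "pc (loc (E j0) x) \<in> {5..13}" using rg[OF less.prems] j0 by auto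
    have st: "U_step \<delta> x (E j0) (E (Suc j0))" using stp[of j0] j0 by simp
    from pc_next[OF st r]
    consider "pc (loc (E (Suc j0)) x) = 4" | "pc (loc (E j0) x) < pc (loc (E (Suc j0)) x) \<and> pc (loc (E (Suc j0)) x) \<le> 13" by blast
    then show ?thesis
    proof cases
      case 1
      obtain j where "j \<ge> Suc j0" "sched j = x" "loc (E j) x = loc (E (Suc j0)) x" using nxt[OF inf] by blast
      then show ?thesis using 1 j0 by (intro exI[of _ j]) auto
    next
      case 2
      have "14 - pc (loc (E (Suc j0)) x) < 14 - pc (loc (E k) x)" using 2 j0 by auto
      moreover have "k1 \<le> Suc j0" using j0 less.prems by auto
      ultimately obtain j where "j \<ge> Suc j0" "sched j = x" "pc (loc (E j) x) = 4" using less.hyps by blast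
      then show ?thesis using j0 by (intro exI[of _ j]) auto
    qed
  qed
qed

lemma stay_step: assumes p1: "pc (loc (E (Suc n)) x) \<in> {3..14}" and p2: "lt (loc (E (Suc n)) x) < Cc (E k0)"
  and kn: "k0 \<le> n"
  shows "pc (loc (E n) x) \<in> {3..14} \<and> lt (loc (E (Suc n)) x) = lt (loc (E n) x)"
proof (cases "sched n = x")
  case False
  then have l: "loc (E (Suc n)) x = loc (E n) x" using oth by simp
  show ?thesis using l p1 by simp
next
  case True
  have st: "U_step \<delta> x (E n) (E (Suc n))" using stp[of n] True by simp
  have c: "pc (loc (E n) x) = 2 \<or> pc (loc (E n) x) \<in> {3..13}" using L_pc3[OF st p1] .
  have ltr: "lt (loc (E (Suc n)) x) = (if pc (loc (E n) x) = 2 then Cc (E n) else lt (loc (E n) x))" using L_lt[OF st] .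
  have cc: "Cc (E k0) \<le> Cc (E n)" using Cc_le kn by blast
  have n2: "pc (loc (E n) x) \<noteq> 2"
  proof
    assume h: "pc (loc (E n) x) = 2"
    then have "lt (loc (E (Suc n)) x) = Cc (E n)" using ltr by simp
    then show False using p2 cc by linarith
  qed
  then have a: "pc (loc (E n) x) \<in> {3..13}" using c by blast
  then show ?thesis using ltr n2 by auto
qed

lemma stay3_aux: "\<forall>k. k = k0 + d \<longrightarrow> pc (loc (E k) x) \<in> {3..14} \<longrightarrow> lt (loc (E k) x) < Cc (E k0) \<longrightarrow>
     pc (loc (E k0) x) \<in> {3..14} \<and> lt (loc (E k0) x) = lt (loc (E k) x) \<and> (\<forall>m. k0 \<le> m \<and> m \<le> k \<longrightarrow> pc (loc (E m) x) \<in> {3..14})"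
proof (induction d)
  case 0
  show ?case
  proof (intro allI impI)
    fix k assume "k = k0 + 0" "pc (loc (E k) x) \<in> {3..14}" "lt (loc (E k) x) < Cc (E k0)"
    then show "pc (loc (E k0) x) \<in> {3..14} \<and> lt (loc (E k0) x) = lt (loc (E k) x) \<and> (\<forall>m. k0 \<le> m \<and> m \<le> k \<longrightarrow> pc (loc (E m) x) \<in> {3..14})"
      by (metis add_0_right le_antisym)
  qed
next
  case (Suc d)
  show ?case
  proof (intro allI impI)
    fix k assume k: "k = k0 + Suc d" "pc (loc (E k) x) \<in> {3..14}" "lt (loc (E k) x) < Cc (E k0)"
    define n where "n = k0 + d"
    have kn: "k = Suc n" using k n_def by simp
    have s: "pc (loc (E n) x) \<in> {3..14} \<and> lt (loc (E (Suc n)) x) = lt (loc (E n) x)"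
      using stay_step[of n x k0] k kn n_def by simp
    have ih: "pc (loc (E k0) x) \<in> {3..14} \<and> lt (loc (E k0) x) = lt (loc (E n) x) \<and> (\<forall>m. k0 \<le> m \<and> m \<le> n \<longrightarrow> pc (loc (E m) x) \<in> {3..14})"
    proof -
      have "lt (loc (E n) x) < Cc (E k0)" using s k kn by simp
      then show ?thesis using Suc.IH s n_def by blast
    qed
    have all: "\<forall>m. k0 \<le> m \<and> m \<le> k \<longrightarrow> pc (loc (E m) x) \<in> {3..14}"
    proof (intro allI impI)
      fix m assume m: "k0 \<le> m \<and> m \<le> k"
      show "pc (loc (E m) x) \<in> {3..14}"
      proof (cases "m = k")
        case True then show ?thesis using k by simp
      next
        case False then have "m \<le> n" using m kn by simp
        then show ?thesis using ih m by blast
      qed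
    qed
    show "pc (loc (E k0) x) \<in> {3..14} \<and> lt (loc (E k0) x) = lt (loc (E k) x) \<and> (\<forall>m. k0 \<le> m \<and> m \<le> k \<longrightarrow> pc (loc (E m) x) \<in> {3..14})"
      using ih s kn all by simp
  qed
qed

lemma stay3: assumes "k0 \<le> k"
  shows "pc (loc (E k) x) \<in> {3..14} \<Longrightarrow> lt (loc (E k) x) < Cc (E k0) \<Longrightarrow>
     pc (loc (E k0) x) \<in> {3..14} \<and> lt (loc (E k0) x) = lt (loc (E k) x) \<and> (\<forall>m. k0 \<le> m \<and> m \<le> k \<longrightarrow> pc (loc (E m) x) \<in> {3..14})"
proof -
  obtain d where "k = k0 + d" using assms le_Suc_ex by blast
  then show "pc (loc (E k) x) \<in> {3..14} \<Longrightarrow> lt (loc (E k) x) < Cc (E k0) \<Longrightarrow> ?thesis"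
    using stay3_aux[of k0 d x] by blast
qed

lemma finite_active: "finite {x. pc (loc (E k) x) \<noteq> 1}"
proof (rule finite_subset)
  show "{x. pc (loc (E k) x) \<noteq> 1} \<subseteq> sched ` {..<k}"
  proof
    fix x assume "x \<in> {x. pc (loc (E k) x) \<noteq> 1}"
    then obtain m where "m < k" "sched m = x" using active_before by blast
    then show "x \<in> sched ` {..<k}" by blast
  qed
  show "finite (sched ` {..<k})" by simp
qed

theorem core: "\<forall>x k. pc (loc (E k) x) \<in> {3..14} \<longrightarrow> lt (loc (E k) x) = t \<longrightarrow> (\<exists>\<^sub>\<infinity>j. sched j = x) \<longrightarrow>
    (\<exists>j\<ge>k. sched j = x \<and> pc (loc (E j) x) = 14)"
proof (induction t rule: less_induct)
  case (less t)
  show ?case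
  proof (intro allI impI)
    fix p k0
    assume a1: "pc (loc (E k0) p) \<in> {3..14}" and a2: "lt (loc (E k0) p) = t" and infp: "\<exists>\<^sub>\<infinity>j. sched j = p"
    show "\<exists>j\<ge>k0. sched j = p \<and> pc (loc (E j) p) = 14"
    proof (rule ccontr)
      assume NC: "\<not> ?thesis"
      have no14: "\<And>j. k0 \<le> j \<Longrightarrow> pc (loc (E j) p) \<noteq> 14"
      proof
        fix j assume "k0 \<le> j" "pc (loc (E j) p) = 14"
        then obtain j' where "j' \<ge> j" "sched j' = p" "loc (E j') p = loc (E j) p" using nxt[OF infp] by blast
        then show False using NC \<open>k0 \<le> j\<close> \<open>pc (loc (E j) p) = 14\<close> by auto
      qed
      define o0 where "o0 = lop (loc (E k0) p)"
      have R: "\<And>j. k0 \<le> j \<Longrightarrow> pc (loc (E j) p) \<in> {3..13} \<and> lt (loc (E j) p) = t \<and> lop (loc (E j) p) = o0"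
      proof -
        fix j assume "k0 \<le> j" then show "pc (loc (E j) p) \<in> {3..13} \<and> lt (loc (E j) p) = t \<and> lop (loc (E j) p) = o0"
        proof (induction j rule: dec_induct)
          case base then show ?case using a1 a2 no14[of k0] unfolding o0_def by auto
        next
          case (step n)
          show ?case
          proof (cases "sched n = p")
            case False then show ?thesis using oth step by simp
          next
            case True
            have st: "U_step \<delta> p (E n) (E (Suc n))" using stp[of n] True by simp
            have "pc (loc (E (Suc n)) p) \<noteq> 14" using no14[of "Suc n"] step by simp
            then show ?thesis using pc_next4[OF st] step by auto
          qed
        qed
      qed
      have tC: "t < Cc (E k0)" using invs(1)[of k0] a1 a2 unfolding I_lt_def by auto
      obtain k1 where k1: "k0 \<le> k1" "pc (loc (E k1) p) \<in> {4..13}" "Hh (E k1) p = (t, NULL) \<or> pc (loc (E k0) p) \<noteq> 3"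
      proof (cases "pc (loc (E k0) p) = 3")
        case True
        obtain j3 where j3: "j3 \<ge> k0" "sched j3 = p" "loc (E j3) p = loc (E k0) p" using nxt[OF infp] by blast
        have st: "U_step \<delta> p (E j3) (E (Suc j3))" using stp[of j3] j3 by simp
        have p3: "pc (loc (E j3) p) = 3" using j3 True by simp
        have "pc (loc (E (Suc j3)) p) = 4" using step_pc_cases(3)[OF st p3] .
        moreover have "Hh (E (Suc j3)) p = (t, NULL)" using step_H[OF st] p3 R[of j3] j3 by simp
        ultimately show ?thesis using that[of "Suc j3"] j3 by auto
      next
        case False then show ?thesis using that[of k0] R[of k0] by auto
      qed
      have rng: "\<And>j. k1 \<le> j \<Longrightarrow> pc (loc (E j) p) \<in> {4..13}"
      proof -
        fix j assume "k1 \<le> j" then show "pc (loc (E j) p) \<in> {4..13}"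
        proof (induction j rule: dec_induct)
          case base then show ?case using k1 by simp
        next
          case (step n)
          show ?case
          proof (cases "sched n = p")
            case False then show ?thesis using oth step by simp
          next
            case True
            have st: "U_step \<delta> p (E n) (E (Suc n))" using stp[of n] True by simp
            have "pc (loc (E (Suc n)) p) \<noteq> 14" using no14[of "Suc n"] step k1 by simp
            then show ?thesis using pc_next4[OF st] step by auto
          qed
        qed
      qed
      have pend: "\<And>j. k1 \<le> j \<Longrightarrow> Hh (E j) p = (t, NULL)"
      proof (rule ccontr)
        fix j' assume j': "k1 \<le> j'" "Hh (E j') p \<noteq> (t, NULL)"
        have per: "\<And>j. j' \<le> j \<Longrightarrow> Hh (E j) p \<noteq> (t, NULL)"
        proof -
          fix j assume "j' \<le> j" then show "Hh (E j) p \<noteq> (t, NULL)"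
          proof (induction j rule: dec_induct)
            case base then show ?case using j' by simp
          next
            case (step n)
            have "sched n \<noteq> p \<or> pc (loc (E n) (sched n)) \<noteq> 3 \<or> lt (loc (E n) (sched n)) \<noteq> t"
              using rng[of n] step j' by auto
            then show ?case using Hne_persist[OF stp[of n] invs(4) _ step(3)] by blast
          qed
        qed
        obtain j4 where j4: "j4 \<ge> j'" "sched j4 = p" "pc (loc (E j4) p) = 4"
          using reach4_ex[OF infp rng j'(1)] by blast
        have st: "U_step \<delta> p (E j4) (E (Suc j4))" using stp[of j4] j4 by simp
        have "Hh (E j4) p \<noteq> (lt (loc (E j4) p), NULL)" using per[of j4] R[of j4] j4 j' k1 by simp
        then have "pc (loc (E (Suc j4)) p) = 14" using step_pc_cases(4)[OF st j4(3)] by simp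
        then show False using rng[of "Suc j4"] j4 j' by simp
      qed
      define F where "F = {x. pc (loc (E k0) x) \<in> {3..14} \<and> lt (loc (E k0) x) < t}"
      have finF: "finite F"
      proof (rule finite_subset[OF _ finite_active[of k0]])
        show "F \<subseteq> {x. pc (loc (E k0) x) \<noteq> 1}" unfolding F_def by auto
      qed
      have bx: "\<forall>x\<in>F. \<exists>b. \<forall>k\<ge>b. sched k = x \<longrightarrow> \<not> (pc (loc (E k) x) \<in> {3..14} \<and> lt (loc (E k) x) < t)"
      proof
        fix x assume xF: "x \<in> F"
        have xlt: "lt (loc (E k0) x) < t" and xpc: "pc (loc (E k0) x) \<in> {3..14}" using xF unfolding F_def by auto
        show "\<exists>b. \<forall>k\<ge>b. sched k = x \<longrightarrow> \<not> (pc (loc (E k) x) \<in> {3..14} \<and> lt (loc (E k) x) < t)"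
        proof (cases "\<exists>\<^sub>\<infinity>j. sched j = x")
          case True
          have IH: "\<forall>y k'. pc (loc (E k') y) \<in> {3..14} \<longrightarrow> lt (loc (E k') y) = lt (loc (E k0) x) \<longrightarrow> (\<exists>\<^sub>\<infinity>j. sched j = y) \<longrightarrow>
              (\<exists>j\<ge>k'. sched j = y \<and> pc (loc (E j) y) = 14)" using less.IH[OF xlt] by blast
          have "\<exists>j\<ge>k0. sched j = x \<and> pc (loc (E j) x) = 14"
            using IH xpc True by blast
          then obtain j where j: "j \<ge> k0" "sched j = x" "pc (loc (E j) x) = 14" by blast
          have st: "U_step \<delta> x (E j) (E (Suc j))" using stp[of j] j(2) by simp
          have p1: "pc (loc (E (Suc j)) x) = 1" using step_pc_cases(14)[OF st j(3)] .
          have "\<forall>k\<ge>Suc j. sched k = x \<longrightarrow> \<not> (pc (loc (E k) x) \<in> {3..14} \<and> lt (loc (E k) x) < t)"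
          proof (intro allI impI notI)
            fix k assume k: "Suc j \<le> k" "sched k = x" "pc (loc (E k) x) \<in> {3..14} \<and> lt (loc (E k) x) < t"
            have kk: "k0 \<le> k" using k(1) j(1) by simp
            have l: "lt (loc (E k) x) < Cc (E k0)" using k(3) tC by simp
            have "\<forall>m. k0 \<le> m \<and> m \<le> k \<longrightarrow> pc (loc (E m) x) \<in> {3..14}"
              using stay3[OF kk conjunct1[OF k(3)] l] by blast
            then have "pc (loc (E (Suc j)) x) \<in> {3..14}" using k(1) j(1) by simp
            then show False using p1 by simp
          qed
          then show ?thesis by blast
        next
          case False
          then obtain b where "\<forall>n\<ge>b. \<not> sched n = x" using not_INFM[of "\<lambda>j. sched j = x"] by blast
          then show ?thesis by blast
        qed
      qed
      then obtain bf where bf: "\<forall>x\<in>F. \<forall>k\<ge>bf x. sched k = x \<longrightarrow> \<not> (pc (loc (E k) x) \<in> {3..14} \<and> lt (loc (E k) x) < t)"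
        using bchoice[OF bx] by blast
      define N1 where "N1 = k1 + (\<Sum>x\<in>F. bf x)"
      have Nw: "\<And>k x. N1 \<le> k \<Longrightarrow> sched k = x \<Longrightarrow> x \<noteq> p \<Longrightarrow> pc (loc (E k) x) \<in> {3..14} \<Longrightarrow> t < lt (loc (E k) x)"
      proof (rule ccontr)
        fix k x assume k: "N1 \<le> k" "sched k = x" "x \<noteq> p" "pc (loc (E k) x) \<in> {3..14}" "\<not> t < lt (loc (E k) x)"
        have kk: "k0 \<le> k" using k(1) k1(1) unfolding N1_def by simp
        have l: "lt (loc (E k) x) < Cc (E k0)" using k(5) tC by simp
        have sx: "pc (loc (E k0) x) \<in> {3..14} \<and> lt (loc (E k0) x) = lt (loc (E k) x)"
          using stay3[OF kk k(4) l] by blast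
        show False
        proof (cases "lt (loc (E k) x) = t")
          case True
          have U: "\<forall>x y. x \<noteq> y \<longrightarrow> pc (loc (E k0) x) \<in> {3..14} \<longrightarrow> pc (loc (E k0) y) \<in> {3..14} \<longrightarrow> lt (loc (E k0) x) \<noteq> lt (loc (E k0) y)"
            using invs(2)[of k0] unfolding I_U_def by blast
          then show False using U[rule_format, of x p] sx a1 a2 k(3) True by simp
        next
          case False
          then have ltt: "lt (loc (E k) x) < t" using k(5) by simp
          then have xF: "x \<in> F" using sx unfolding F_def by simp
          have "bf x \<le> (\<Sum>y\<in>F. bf y)" by (rule member_le_sum) (use xF finF in auto)
          then have bk: "bf x \<le> k" using k(1) unfolding N1_def by simp
          have "\<not> (pc (loc (E k) x) \<in> {3..14} \<and> lt (loc (E k) x) < t)" using bf xF bk k(2) by blast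
          then show False using k(4) ltt by blast
        qed
      qed
      interpret s2: starve2 \<delta> E sched p t k1 o0 N1
      proof unfold_locales
        show "\<exists>\<^sub>\<infinity>j. sched j = p" by (rule infp)
        show "\<And>j. k1 \<le> j \<Longrightarrow> pc (loc (E j) p) \<in> {4..13}" by (rule rng)
        show "\<And>j. k1 \<le> j \<Longrightarrow> lt (loc (E j) p) = t" using R k1 by simp
        show "\<And>j. k1 \<le> j \<Longrightarrow> lop (loc (E j) p) = o0" using R k1 by simp
        show "\<And>j. k1 \<le> j \<Longrightarrow> Hh (E j) p = (t, NULL)" by (rule pend)
        show "k1 \<le> N1" unfolding N1_def by simp
        show "\<And>k x. N1 \<le> k \<Longrightarrow> sched k = x \<Longrightarrow> x \<noteq> p \<Longrightarrow> pc (loc (E k) x) \<in> {3..14} \<Longrightarrow> t < lt (loc (E k) x)"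
          by (rule Nw)
      qed
      show False by (rule s2.starve_false)
    qed
  qed
qed

end

theorem mainTheorem1:
  fixes \<delta> :: "('q \<times> 'o \<times> 'q \<times> 'r) set" and s0 :: 'q
    and H0 :: "'p \<Rightarrow> nat \<times> 'r rval" and L0 :: "'p \<Rightarrow> ('p,'o,'q,'r) local"
    and E :: "nat \<Rightarrow> ('p,'o,'q,'r) config" and sched :: "nat \<Rightarrow> 'p"
    and p :: 'p and i :: nat
  assumes "init_config s0 H0 L0 (E 0)"
    and "\<forall>k. U_step \<delta> (sched k) (E k) (E (Suc k))"
    and "sched i = p" and "pc (loc (E i) p) = 1"
    and "\<exists>\<^sub>\<infinity>k. sched k = p"
  shows "\<exists>j\<ge>i. sched j = p \<and> pc (loc (E j) p) = 14"
proof -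
  interpret ex \<delta> E sched
  proof unfold_locales
    show "\<And>k. U_step \<delta> (sched k) (E k) (E (Suc k))" using assms(2) by blast
    show "Inv (E 0)" by (rule inv_init[OF assms(1)])
    show "\<And>x. pc (loc (E 0) x) = 1" using assms(1) unfolding init_config_def by auto
  qed
  have st: "U_step \<delta> p (E i) (E (Suc i))" using stp[of i] assms(3) by simp
  have p2: "pc (loc (E (Suc i)) p) = 2" using step_pc_cases(1)[OF st assms(4)] .
  obtain j2 where j2: "j2 \<ge> Suc i" "sched j2 = p" "loc (E j2) p = loc (E (Suc i)) p" using nxt[OF assms(5)] by blast
  have st2: "U_step \<delta> p (E j2) (E (Suc j2))" using stp[of j2] j2 by simp
  have p3: "pc (loc (E (Suc j2)) p) = 3" using step_pc_cases(2)[OF st2] j2 p2 by simp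
  have "\<exists>j\<ge>Suc j2. sched j = p \<and> pc (loc (E j) p) = 14"
    using core[of "lt (loc (E (Suc j2)) p)"] p3 assms(5) by auto
  then obtain j where "j \<ge> Suc j2" "sched j = p" "pc (loc (E j) p) = 14" by blast
  moreover have "i \<le> j" using j2 \<open>j \<ge> Suc j2\<close> by simp
  ultimately show ?thesis by blast
qed

end
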